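(* Let $\mathcal T$ be an orbital category and $\mathcal C$ a $\mathcal T$-weak indexing system. Then each of $c(\mathcal C)=\{V\in\mathcal T\mid *_V\in\mathcal C_V\}$, $\upsilon(\mathcal C)=\{V\in\mathcal T\mid\emptyset_V\in\mathcal C_V\}$, $\nabla(\mathcal C)=\{V\in\mathcal T\mid 2\cdot *_V\in\mathcal C_V\}$ is a $\mathcal T$-family.
   Context: For a small category $\mathcal T$, $\mathbb F_{\mathcal T}$ is the full subcategory of $\mathrm{Fun}(\mathcal T^{op},\mathrm{Set})$ on finite coproducts of representables; $\mathcal T$ is orbital if $\mathbb F_{\mathcal T}$ has pullbacks. $\mathbb F_V:=\mathbb F_{\mathcal T,/V}$, $*_V$ terminal, $\emptyset_V$ initial, $n\cdot S$ the $n$-fold coproduct; for $f:U\to V$ in $\mathcal T$, $\mathrm{Res}^V_U$ is pullback along $f$, $\mathrm{Ind}^V_U$ postcomposition. A full $\mathcal T$-subcategory $\mathcal C\subseteq\underline{\mathbb F}_{\mathcal T}$ is a choice of isomorphism-closed classes $\mathcal C_V\subseteq\mathrm{Ob}\,\mathbb F_V$ stable under all restrictions. For $S\in\mathbb F_V$ with orbits $U\in\mathrm{Orb}(S)$ (each with a map $U\to V$) and $T_U\in\mathbb F_U$, $\coprod_U^ST_U:=\coprod_U\mathrm{Ind}_U^VT_U$. A $\mathcal T$-weak indexing system is a full $\mathcal T$-subcategory $\mathcal C$ with: $\mathcal C_V\neq\emptyset\Rightarrow *_V\in\mathcal C_V$, and $S\in\mathcal C_V$, $T_U\in\mathcal C_U$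 for all $U$ imply $\coprod^S_UT_U\in\mathcal C_V$. A $\mathcal T$-family is a full subcategory $\mathcal F\subseteq\mathcal T$ such that for every morphism $V\to W$ with $W\in\mathcal F$ we have $V\in\mathcal F$. *)

theory Defs
  imports Main
begin

record ('o, 'm) cat =
  Obj :: "'o set"
  Hom :: "'o \<Rightarrow> 'o \<Rightarrow> 'm set"
  cmp :: "'m \<Rightarrow> 'm \<Rightarrow> 'm"   (* cmp g f = g after f *)
  idt :: "'o \<Rightarrow> 'm"

definition is_category :: "('o, 'm) cat \<Rightarrow> bool" where
  "is_category T \<longleftrightarrow>
     (\<forall>a b f. f \<in> Hom T a b \<longrightarrow> a \<in> Obj T \<and> b \<in> Obj T) \<and>
     (\<forall>a b a' b' f. f \<in> Hom T a b \<longrightarrow> f \<in> Hom T a' b' \<longrightarrow> a = a' \<and> b = b') \<and>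
     (\<forall>a\<in>Obj T. idt T a \<in> Hom T a a) \<and>
     (\<forall>a b c f g. f \<in> Hom T a b \<longrightarrow> g \<in> Hom T b c \<longrightarrow> cmp T g f \<in> Hom T a c) \<and>
     (\<forall>a b f. f \<in> Hom T a b \<longrightarrow> cmp T (idt T b) f = f \<and> cmp T f (idt T a) = f) \<and>
     (\<forall>a b c d f g h. f \<in> Hom T a b \<longrightarrow> g \<in> Hom T b c \<longrightarrow> h \<in> Hom T c d \<longrightarrow>
        cmp T h (cmp T g f) = cmp T (cmp T h g) f)"

text \<open>An object of F_T, a finite coproduct of representables, is represented by the
finite list of its summands (objects of T). A morphism from the list xs to the list ys
is a pair (sigma, fs): sigma sends the index i of a summand of xs to an index of ys and
fs i is a morphism of T from xs!i to ys!(sigma i) (Yoneda lemma; representables are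
coproduct-indecomposable).\<close>

type_synonym 'm ft_mor = "(nat \<Rightarrow> nat) \<times> (nat \<Rightarrow> 'm)"

definition ft_obj :: "('o, 'm) cat \<Rightarrow> 'o list \<Rightarrow> bool" where
  "ft_obj T xs \<longleftrightarrow> set xs \<subseteq> Obj T"

definition ft_mor :: "('o, 'm) cat \<Rightarrow> 'o list \<Rightarrow> 'o list \<Rightarrow> 'm ft_mor \<Rightarrow> bool" where
  "ft_mor T xs ys \<phi> \<longleftrightarrow> ft_obj T xs \<and> ft_obj T ys \<and>
     (\<forall>i<length xs. fst \<phi> i < length ys \<and> snd \<phi> i \<in> Hom T (xs ! i) (ys ! fst \<phi> i))"

definition ft_eq :: "'o list \<Rightarrow> 'm ft_mor \<Rightarrow> 'm ft_mor \<Rightarrow> bool" where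
  "ft_eq xs \<phi> \<psi> \<longleftrightarrow> (\<forall>i<length xs. fst \<phi> i = fst \<psi> i \<and> snd \<phi> i = snd \<psi> i)"

definition ft_comp :: "('o, 'm) cat \<Rightarrow> 'm ft_mor \<Rightarrow> 'm ft_mor \<Rightarrow> 'm ft_mor" where
  "ft_comp T \<psi> \<phi> = (fst \<psi> \<circ> fst \<phi>, \<lambda>i. cmp T (snd \<psi> (fst \<phi> i)) (snd \<phi> i))"

definition ft_id :: "('o, 'm) cat \<Rightarrow> 'o list \<Rightarrow> 'm ft_mor" where
  "ft_id T xs = (id, \<lambda>i. idt T (xs ! i))"

definition ft_pullback :: "('o, 'm) cat \<Rightarrow> 'o list \<Rightarrow> 'o list \<Rightarrow> 'o list \<Rightarrow> 'o list \<Rightarrow>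
    'm ft_mor \<Rightarrow> 'm ft_mor \<Rightarrow> 'm ft_mor \<Rightarrow> 'm ft_mor \<Rightarrow> bool" where
  "ft_pullback T P X Y Z p1 p2 f g \<longleftrightarrow>
     ft_mor T P X p1 \<and> ft_mor T P Y p2 \<and> ft_mor T X Z f \<and> ft_mor T Y Z g \<and>
     ft_eq P (ft_comp T f p1) (ft_comp T g p2) \<and>
     (\<forall>Q q1 q2. ft_mor T Q X q1 \<and> ft_mor T Q Y q2 \<and> ft_eq Q (ft_comp T f q1) (ft_comp T g q2) \<longrightarrow>
        (\<exists>h. ft_mor T Q P h \<and> ft_eq Q (ft_comp T p1 h) q1 \<and> ft_eq Q (ft_comp T p2 h) q2) \<and>
        (\<forall>h h'. ft_mor T Q P h \<and> ft_eq Q (ft_comp T p1 h) q1 \<and> ft_eq Q (ft_comp T p2 h) q2 \<and>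
                ft_mor T Q P h' \<and> ft_eq Q (ft_comp T p1 h') q1 \<and> ft_eq Q (ft_comp T p2 h') q2 \<longrightarrow>
                ft_eq Q h h'))"

definition orbital :: "('o, 'm) cat \<Rightarrow> bool" where
  "orbital T \<longleftrightarrow> is_category T \<and>
     (\<forall>X Y Z f g. ft_mor T X Z f \<and> ft_mor T Y Z g \<longrightarrow>
        (\<exists>P p1 p2. ft_pullback T P X Y Z p1 p2 f g))"

text \<open>An object of F_V is a list of pairs (U, p) with p : U \<rightarrow> V, i.e. the summands of
an object S of F_T together with the components of the structure map S \<rightarrow> V.\<close>

type_synonym ('o, 'm) fv_obj = "('o \<times> 'm) list"

definition fv_obj :: "('o, 'm) cat \<Rightarrow> 'o \<Rightarrow> ('o, 'm) fv_obj \<Rightarrow> bool" where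
  "fv_obj T V S \<longleftrightarrow> V \<in> Obj T \<and> (\<forall>(U, p)\<in>set S. U \<in> Obj T \<and> p \<in> Hom T U V)"

definition fv_struct :: "('o, 'm) fv_obj \<Rightarrow> 'm ft_mor" where
  "fv_struct S = (\<lambda>_. 0, \<lambda>i. snd (S ! i))"

definition fv_mor :: "('o, 'm) cat \<Rightarrow> 'o \<Rightarrow> ('o, 'm) fv_obj \<Rightarrow> ('o, 'm) fv_obj \<Rightarrow> 'm ft_mor \<Rightarrow> bool" where
  "fv_mor T V S S' \<phi> \<longleftrightarrow> ft_mor T (map fst S) (map fst S') \<phi> \<and>
     (\<forall>i<length S. cmp T (snd (S' ! fst \<phi> i)) (snd \<phi> i) = snd (S ! i))"

definition fv_iso :: "('o, 'm) cat \<Rightarrow> 'o \<Rightarrow> ('o, 'm) fv_obj \<Rightarrow> ('o, 'm) fv_obj \<Rightarrow> bool" where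
  "fv_iso T V S S' \<longleftrightarrow> fv_obj T V S \<and> fv_obj T V S' \<and>
     (\<exists>\<phi> \<psi>. fv_mor T V S S' \<phi> \<and> fv_mor T V S' S \<psi> \<and>
        ft_eq (map fst S) (ft_comp T \<psi> \<phi>) (ft_id T (map fst S)) \<and>
        ft_eq (map fst S') (ft_comp T \<phi> \<psi>) (ft_id T (map fst S')))"

definition term_V :: "('o, 'm) cat \<Rightarrow> 'o \<Rightarrow> ('o, 'm) fv_obj" where
  "term_V T V = [(V, idt T V)]"

definition init_V :: "('o, 'm) fv_obj" where
  "init_V = []"

definition two_term_V :: "('o, 'm) cat \<Rightarrow> 'o \<Rightarrow> ('o, 'm) fv_obj" where
  "two_term_V T V = [(V, idt T V), (V, idt T V)]"

definition is_restriction :: "('o, 'm) cat \<Rightarrow> 'o \<Rightarrow> 'o \<Rightarrow> 'm \<Rightarrow>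
    ('o, 'm) fv_obj \<Rightarrow> ('o, 'm) fv_obj \<Rightarrow> bool" where
  "is_restriction T U V f S R \<longleftrightarrow> fv_obj T U R \<and> fv_obj T V S \<and> f \<in> Hom T U V \<and>
     (\<exists>g. ft_pullback T (map fst R) (map fst S) [U] [V] g (fv_struct R) (fv_struct S) (\<lambda>_. 0, \<lambda>_. f))"

text \<open>Indexed coproduct: for S over V with orbits (S!i) and objects Ts i over the orbit
fst (S!i), form the coproduct of the inductions along snd (S!i).\<close>

definition indexed_coprod :: "('o, 'm) cat \<Rightarrow> ('o, 'm) fv_obj \<Rightarrow> (nat \<Rightarrow> ('o, 'm) fv_obj) \<Rightarrow> ('o, 'm) fv_obj" where
  "indexed_coprod T S Ts =
     concat (map (\<lambda>i. map (\<lambda>(W, q). (W, cmp T (snd (S ! i)) q)) (Ts i)) [0..<length S])"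

definition full_T_subcat :: "('o, 'm) cat \<Rightarrow> ('o \<Rightarrow> ('o, 'm) fv_obj set) \<Rightarrow> bool" where
  "full_T_subcat T C \<longleftrightarrow>
     (\<forall>V. \<forall>S\<in>C V. fv_obj T V S) \<and>
     (\<forall>V S S'. S \<in> C V \<longrightarrow> fv_iso T V S S' \<longrightarrow> S' \<in> C V) \<and>
     (\<forall>U V f S R. S \<in> C V \<longrightarrow> is_restriction T U V f S R \<longrightarrow> R \<in> C U)"

definition weak_indexing_system :: "('o, 'm) cat \<Rightarrow> ('o \<Rightarrow> ('o, 'm) fv_obj set) \<Rightarrow> bool" where
  "weak_indexing_system T C \<longleftrightarrow> full_T_subcat T C \<and>
     (\<forall>V\<in>Obj T. C V \<noteq> {} \<longrightarrow> term_V T V \<in> C V) \<and>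
     (\<forall>V\<in>Obj T. \<forall>S Ts. S \<in> C V \<longrightarrow> (\<forall>i<length S. Ts i \<in> C (fst (S ! i))) \<longrightarrow>
        indexed_coprod T S Ts \<in> C V)"

definition T_family :: "('o, 'm) cat \<Rightarrow> 'o set \<Rightarrow> bool" where
  "T_family T F \<longleftrightarrow> F \<subseteq> Obj T \<and> (\<forall>V W f. f \<in> Hom T V W \<longrightarrow> W \<in> F \<longrightarrow> V \<in> F)"

definition c_fam :: "('o, 'm) cat \<Rightarrow> ('o \<Rightarrow> ('o, 'm) fv_obj set) \<Rightarrow> 'o set" where
  "c_fam T C = {V \<in> Obj T. term_V T V \<in> C V}"

definition upsilon_fam :: "('o, 'm) cat \<Rightarrow> ('o \<Rightarrow> ('o, 'm) fv_obj set) \<Rightarrow> 'o set" where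
  "upsilon_fam T C = {V \<in> Obj T. init_V \<in> C V}"

definition nabla_fam :: "('o, 'm) cat \<Rightarrow> ('o \<Rightarrow> ('o, 'm) fv_obj set) \<Rightarrow> 'o set" where
  "nabla_fam T C = {V \<in> Obj T. two_term_V T V \<in> C V}"

end

theory Submission
  imports Defs
begin

lemma cat_dom: "is_category T \<Longrightarrow> f \<in> Hom T a b \<Longrightarrow> a \<in> Obj T \<and> b \<in> Obj T"
  unfolding is_category_def by (elim conjE) blast
lemma cat_id: "is_category T \<Longrightarrow> a \<in> Obj T \<Longrightarrow> idt T a \<in> Hom T a a"
  unfolding is_category_def by (elim conjE) blast
lemma cat_idl: "is_category T \<Longrightarrow> f \<in> Hom T a b \<Longrightarrow> cmp T (idt T b) f = f"
  unfolding is_category_def by (elim conjE) blast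
lemma cat_idr: "is_category T \<Longrightarrow> f \<in> Hom T a b \<Longrightarrow> cmp T f (idt T a) = f"
  unfolding is_category_def by (elim conjE) blast

lemma restr_rep:
  assumes cat: "is_category T" and f: "f \<in> Hom T V W"
  shows "is_restriction T V W f (replicate n (W, idt T W)) (replicate n (V, idt T V))"
proof -
  have VW: "V \<in> Obj T" "W \<in> Obj T" using cat_dom[OF cat f] by blast+
  have idV: "idt T V \<in> Hom T V V" and idW: "idt T W \<in> Hom T W W"
    using cat_id[OF cat] VW by blast+
  have idl: "\<And>a b g. g \<in> Hom T a b \<Longrightarrow> cmp T (idt T b) g = g"
    using cat_idl[OF cat] by blast
  let ?P = "replicate n V" and ?X = "replicate n W"
  let ?p1 = "(\<lambda>i::nat. i, \<lambda>_::nat. f)"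
  let ?p2 = "fv_struct (replicate n (V, idt T V))"
  let ?ff = "fv_struct (replicate n (W, idt T W))"
  let ?gg = "((\<lambda>_. 0), (\<lambda>_. f)) :: 'b ft_mor"
  have mR: "map fst (replicate n (V, idt T V)) = ?P" and mS: "map fst (replicate n (W, idt T W)) = ?X"
    by simp_all
  have p2s: "\<And>i. i < n \<Longrightarrow> snd ?p2 i = idt T V" "fst ?p2 = (\<lambda>_. 0)"
    by (auto simp: fv_struct_def)
  have ffs: "\<And>i. i < n \<Longrightarrow> snd ?ff i = idt T W" "fst ?ff = (\<lambda>_. 0)"
    by (auto simp: fv_struct_def)
  have PB: "ft_pullback T ?P ?X [V] [W] ?p1 ?p2 ?ff ?gg"
    unfolding ft_pullback_def
  proof (intro conjI allI impI)
    show "ft_mor T ?P ?X ?p1" using VW f by (auto simp: ft_mor_def ft_obj_def)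
    show "ft_mor T ?P [V] ?p2" using VW idV p2s by (auto simp: ft_mor_def ft_obj_def)
    show "ft_mor T ?X [W] ?ff" using VW idW ffs by (auto simp: ft_mor_def ft_obj_def)
    show "ft_mor T [V] [W] ?gg" using VW f by (auto simp: ft_mor_def ft_obj_def)
    show "ft_eq ?P (ft_comp T ?ff ?p1) (ft_comp T ?gg ?p2)"
      using ffs p2s idl f idV cat_idr[OF cat f] by (auto simp: ft_eq_def ft_comp_def fv_struct_def)
  next
    fix Q q1 q2
    assume A: "ft_mor T Q ?X q1 \<and> ft_mor T Q [V] q2 \<and> ft_eq Q (ft_comp T ?ff q1) (ft_comp T ?gg q2)"
    have q1: "\<And>i. i < length Q \<Longrightarrow> fst q1 i < n \<and> snd q1 i \<in> Hom T (Q ! i) W"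
      using A by (auto simp: ft_mor_def)
    have q2: "\<And>i. i < length Q \<Longrightarrow> fst q2 i = 0 \<and> snd q2 i \<in> Hom T (Q ! i) V"
      using A by (auto simp: ft_mor_def)
    have eq: "\<And>i. i < length Q \<Longrightarrow> cmp T (idt T W) (snd q1 i) = cmp T f (snd q2 i)"
      using A q1 ffs by (auto simp: ft_eq_def ft_comp_def)
    have eq2: "\<And>i. i < length Q \<Longrightarrow> snd q1 i = cmp T f (snd q2 i)"
      using eq q1 idl by metis
    let ?h = "(fst q1, snd q2)"
    show "\<exists>h. ft_mor T Q ?P h \<and> ft_eq Q (ft_comp T ?p1 h) q1 \<and> ft_eq Q (ft_comp T ?p2 h) q2"
    proof (intro exI conjI)
      show "ft_mor T Q ?P ?h" using A q1 q2 VW by (auto simp: ft_mor_def ft_obj_def)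
      show "ft_eq Q (ft_comp T ?p1 ?h) q1" using eq2 by (auto simp: ft_eq_def ft_comp_def)
      show "ft_eq Q (ft_comp T ?p2 ?h) q2" using q1 q2 p2s idl
        by (auto simp: ft_eq_def ft_comp_def) (metis idl)
    qed
  next
      fix Q q1 q2 h h'
      assume A: "ft_mor T Q ?X q1 \<and> ft_mor T Q [V] q2 \<and> ft_eq Q (ft_comp T ?ff q1) (ft_comp T ?gg q2)"
      assume B: "ft_mor T Q ?P h \<and> ft_eq Q (ft_comp T ?p1 h) q1 \<and> ft_eq Q (ft_comp T ?p2 h) q2 \<and>
                ft_mor T Q ?P h' \<and> ft_eq Q (ft_comp T ?p1 h') q1 \<and> ft_eq Q (ft_comp T ?p2 h') q2"
      show "ft_eq Q h h'" unfolding ft_eq_def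
      proof (intro allI impI conjI)
        fix i assume i: "i < length Q"
        show "fst h i = fst h' i" using B i by (auto simp: ft_eq_def ft_comp_def)
        have hi: "fst h i < n" "snd h i \<in> Hom T (Q!i) V" "fst h' i < n" "snd h' i \<in> Hom T (Q!i) V"
          using B i by (auto simp: ft_mor_def)
        have "cmp T (idt T V) (snd h i) = snd q2 i" "cmp T (idt T V) (snd h' i) = snd q2 i"
          using B i hi p2s by (auto simp: ft_eq_def ft_comp_def)
        then show "snd h i = snd h' i" using idl hi by metis
      qed
  qed
  show ?thesis
    unfolding is_restriction_def
  proof (intro conjI exI)
    show "fv_obj T V (replicate n (V, idt T V))" using VW idV by (auto simp: fv_obj_def)
    show "fv_obj T W (replicate n (W, idt T W))" using VW idW by (auto simp: fv_obj_def)
    show "f \<in> Hom T V W" by fact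
    show "ft_pullback T (map fst (replicate n (V, idt T V))) (map fst (replicate n (W, idt T W))) [V] [W]
          ?p1 (fv_struct (replicate n (V, idt T V))) (fv_struct (replicate n (W, idt T W))) (\<lambda>_. 0, \<lambda>_. f)"
      using PB by simp
  qed
qed

lemma fam_rep:
  assumes cat: "is_category T" and sub: "full_T_subcat T C"
  shows "T_family T {V \<in> Obj T. replicate n (V, idt T V) \<in> C V}"
  unfolding T_family_def
proof (intro conjI allI impI)
  fix V W f assume f: "f \<in> Hom T V W" and W: "W \<in> {V \<in> Obj T. replicate n (V, idt T V) \<in> C V}"
  have "V \<in> Obj T" using cat_dom[OF cat f] by blast
  moreover have "replicate n (V, idt T V) \<in> C V"
    using sub W restr_rep[OF cat f, of n] unfolding full_T_subcat_def by blast
  ultimately show "V \<in> {V \<in> Obj T. replicate n (V, idt T V) \<in> C V}" by simp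
qed auto

theorem mainTheorem5:
  fixes T :: "('o, 'm) cat" and C :: "'o \<Rightarrow> ('o, 'm) fv_obj set"
  assumes "orbital T"
    and "weak_indexing_system T C"
  shows "T_family T (c_fam T C) \<and> T_family T (upsilon_fam T C) \<and> T_family T (nabla_fam T C)"
proof -
  have cat: "is_category T" using assms(1) unfolding orbital_def by blast
  have sub: "full_T_subcat T C" using assms(2) unfolding weak_indexing_system_def by blast
  have "c_fam T C = {V \<in> Obj T. replicate 1 (V, idt T V) \<in> C V}"
    by (simp add: c_fam_def term_V_def)
  moreover have "upsilon_fam T C = {V \<in> Obj T. replicate 0 (V, idt T V) \<in> C V}"
    by (simp add: upsilon_fam_def init_V_def)
  moreover have "nabla_fam T C = {V \<in> Obj T. replicate 2 (V, idt T V) \<in> C V}"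
    by (simp add: nabla_fam_def two_term_V_def numeral_2_eq_2)
  ultimately show ?thesis using fam_rep[OF cat sub] by metis
qed

end
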